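(* Let $\mathcal{L}\in\mathcal{A}(n,t,\ell)$ and assume there exists $X=(x_1,\dots,x_n)\in\mathcal{L}$, $X\neq\mathbf{0}$, with $|x_i|\le\ell$ for every $1\le i\le n$. Then $N_+(X)\ge t+1$ or $N_-(X)\ge t+1$.
   Context: $\mathcal{S}(n,t,\ell)=\{\mathcal{E}\in\mathbb{Z}^n: 0\le\varepsilon_i\le\ell \text{ for all } i,\ w_H(\mathcal{E})\le t\}$, with $w_H$ the number of nonzero coordinates. A lattice here is the set of integer combinations of $n$ linearly independent vectors of $\mathbb{Z}^n$. $\mathcal{A}(n,t,\ell)$ is the set of lattices $\mathcal{L}\subseteq\mathbb{Z}^n$ such that the translates $X+\mathcal{S}(n,t,\ell)$, $X\in\mathcal{L}$, are pairwise disjoint. For $X\in\mathbb{Z}^n$, $N_+(X)$ is the number of indices $i$ with $x_i>0$ and $N_-(X)$ the number of indices $i$ with $x_i<0$. *)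

theory Defs
  imports Complex_Main
begin

text \<open>Vectors of Z^n are represented as functions nat => int vanishing outside {0..<n}.\<close>

definition zvec :: "nat \<Rightarrow> (nat \<Rightarrow> int) set" where
  "zvec n = {x. \<forall>i\<ge>n. x i = 0}"

definition wH :: "nat \<Rightarrow> (nat \<Rightarrow> int) \<Rightarrow> nat" where
  "wH n x = card {i. i < n \<and> x i \<noteq> 0}"

definition Sset :: "nat \<Rightarrow> nat \<Rightarrow> nat \<Rightarrow> (nat \<Rightarrow> int) set" where
  "Sset n t l = {e \<in> zvec n. (\<forall>i<n. 0 \<le> e i \<and> e i \<le> int l) \<and> wH n e \<le> t}"

definition lin_indep :: "nat \<Rightarrow> (nat \<Rightarrow> nat \<Rightarrow> int) \<Rightarrow> bool" where
  "lin_indep n b \<longleftrightarrow>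
     (\<forall>c :: nat \<Rightarrow> real. (\<forall>i<n. (\<Sum>j<n. c j * real_of_int (b j i)) = 0) \<longrightarrow> (\<forall>j<n. c j = 0))"

definition lattice_gen :: "nat \<Rightarrow> (nat \<Rightarrow> nat \<Rightarrow> int) \<Rightarrow> (nat \<Rightarrow> int) set" where
  "lattice_gen n b = {x. \<exists>c :: nat \<Rightarrow> int. x = (\<lambda>i. if i < n then (\<Sum>j<n. c j * b j i) else 0)}"

definition is_lattice :: "nat \<Rightarrow> (nat \<Rightarrow> int) set \<Rightarrow> bool" where
  "is_lattice n L \<longleftrightarrow> (\<exists>b. (\<forall>j<n. b j \<in> zvec n) \<and> lin_indep n b \<and> L = lattice_gen n b)"

definition Aset :: "nat \<Rightarrow> nat \<Rightarrow> nat \<Rightarrow> (nat \<Rightarrow> int) set set" where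
  "Aset n t l = {L. is_lattice n L \<and>
     (\<forall>X\<in>L. \<forall>Y\<in>L. X \<noteq> Y \<longrightarrow>
        ((\<lambda>e i. X i + e i) ` Sset n t l) \<inter> ((\<lambda>e i. Y i + e i) ` Sset n t l) = {})}"

definition Npos :: "nat \<Rightarrow> (nat \<Rightarrow> int) \<Rightarrow> nat" where
  "Npos n x = card {i. i < n \<and> x i > 0}"

definition Nneg :: "nat \<Rightarrow> (nat \<Rightarrow> int) \<Rightarrow> nat" where
  "Nneg n x = card {i. i < n \<and> x i < 0}"

end

theory Submission
  imports Defs
begin

theorem mainTheorem14:
  fixes n t l :: nat and L :: "(nat \<Rightarrow> int) set" and X :: "nat \<Rightarrow> int"
  assumes "L \<in> Aset n t l"
    and "X \<in> L" and "X \<noteq> (\<lambda>i. 0)"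
    and "\<forall>i<n. \<bar>X i\<bar> \<le> int l"
  shows "Npos n X \<ge> t + 1 \<or> Nneg n X \<ge> t + 1"
proof (rule ccontr)
  assume nc: "\<not> ?thesis"
  hence p: "Npos n X \<le> t" and q: "Nneg n X \<le> t" by auto
  from assms(1) have lat: "is_lattice n L" and disj: "\<forall>X\<in>L. \<forall>Y\<in>L. X \<noteq> Y \<longrightarrow>
        ((\<lambda>e i. X i + e i) ` Sset n t l) \<inter> ((\<lambda>e i. Y i + e i) ` Sset n t l) = {}"
    unfolding Aset_def by auto
  from lat obtain b where L: "L = lattice_gen n b" unfolding is_lattice_def by auto
  have z: "(\<lambda>i. 0) \<in> L" unfolding L lattice_gen_def
    by (rule CollectI, rule exI[of _ "\<lambda>_. 0"]) auto
  have Xout: "\<forall>i\<ge>n. X i = 0" using assms(2) unfolding L lattice_gen_def by auto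
  define e1 where "e1 = (\<lambda>i. if i < n then max (X i) 0 else 0)"
  define e2 where "e2 = (\<lambda>i. if i < n then max (- X i) 0 else 0)"
  have w1: "wH n e1 = Npos n X" unfolding wH_def Npos_def e1_def
    by (rule arg_cong[where f=card]) auto
  have w2: "wH n e2 = Nneg n X" unfolding wH_def Nneg_def e2_def
    by (rule arg_cong[where f=card]) auto
  have s1: "e1 \<in> Sset n t l" unfolding Sset_def zvec_def using w1 p assms(4)
    by (auto simp: e1_def)
  have s2: "e2 \<in> Sset n t l" unfolding Sset_def zvec_def using w2 q assms(4)
    by (auto simp: e2_def)
  have eq: "(\<lambda>i. X i + e2 i) = (\<lambda>i. 0 + e1 i)"
    using Xout by (auto simp: e1_def e2_def max_def not_less)
  have "(\<lambda>i. X i + e2 i) \<in> ((\<lambda>e i. X i + e i) ` Sset n t l) \<inter> ((\<lambda>e i. (\<lambda>i. 0::int) i + e i) ` Sset n t l)"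
    using s1 s2 eq by (auto intro!: image_eqI)
  with disj assms(2,3) z show False by blast
qed

end
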